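(* Let $\lambda_1,\lambda_2,\lambda_3\ge 0$ with $\lambda_1^2+\lambda_2^2+\lambda_3^2=1$, and let $|\psi_{\mathrm{g}W}\rangle=\lambda_1|100\rangle+\lambda_2|010\rangle+\lambda_3|001\rangle$ be a generalized $W$ state with density operator $\psi_{\mathrm{g}W}=|\psi_{\mathrm{g}W}\rangle\langle\psi_{\mathrm{g}W}|$. Let $\psi_W$ denote the standard $W$ state, i.e. the case $\lambda_1=\lambda_2=\lambda_3=1/\sqrt3$. Then $$P(\psi_{\mathrm{g}W})\le \tfrac23 = P(\psi_W),$$ where $P$ is the minimal control power of controlled dense coding.
   Context: All logarithms are base 2 and $S(\rho)=-\mathrm{Tr}(\rho\log_2\rho)$ is the von Neumann entropy. For a two-qubit state $\sigma_{kl}$ on qubits $k$ (Alice) and $l$ (Bob), the dense coding channel capacity is $C(\sigma_{kl})=1+S(\sigma_l)-S(\sigma_{kl})$, where $\sigma_l=\mathrm{Tr}_k\sigma_{kl}$. For a three-qubit state $\rho_{123}$ and distinct $j,k,l\in\{1,2,3\}$ (Charlie holds qubit $j$, Alice qubit $k$, Bob qubit $l$), define the controlled dense coding capacity $$C^{jkl}_{CD}(\rho_{123})=\max_U\Big[\sum_{i=0}^1 p_i\, C(\rho^i_{kl})\Big],$$ the maximum over all $2\times2$ unitaries $U$, where $p_i=\langle i|U\rho_jU^\dagger|i\rangle$ with $\rho_j=\mathrm{Tr}_{kl}\rho_{123}$, and $\rho^i_{kl}=\mathrm{Tr}_j\big[(U^\dagger|i\rangle\langle i|U)_j\,\rho_{123}\big]/p_i$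 is the post-measurement state of qubits $k,l$ when Charlie measures qubit $j$ in the basis $\{U^\dagger|0\rangle,U^\dagger|1\rangle\}$ and obtains outcome $i$ (terms with $p_i=0$ are omitted). The control power is $P^{jkl}(\rho_{123})=C^{jkl}_{CD}(\rho_{123})-C(\rho_{kl})$ with $\rho_{kl}=\mathrm{Tr}_j\rho_{123}$, and the minimal control power is $P(\rho_{123})=\min_{(j,k,l)}P^{jkl}(\rho_{123})$, the minimum over all permutations $(j,k,l)$ of $(1,2,3)$. *)

theory Defs
  imports "Jordan_Normal_Form.Schur_Decomposition" "HOL-Computational_Algebra.Polynomial"
begin

(* Conventions: qubits are numbered 1,2,3.  The computational basis state
   |b1 b2 b3> of three qubits has index 4*b1 + 2*b2 + b3 in an 8x8 matrix;
   a two-qubit state of (Alice k, Bob l) has basis index 2*bk + bl;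
   single-qubit index b. *)

definition eta :: "real \<Rightarrow> real" where
  "eta x = (if x \<le> 0 then 0 else x * log 2 x)"

(* von Neumann entropy S(rho) = - Tr(rho log2 rho) = - sum over eigenvalues
   (counted with algebraic multiplicity) of lam * log2 lam, for a Hermitian
   (positive semidefinite) matrix rho. *)
definition vN_entropy :: "complex mat \<Rightarrow> real" where
  "vN_entropy \<rho> = - (\<Sum>z\<in>{z. poly (char_poly \<rho>) z = 0}.
        real (order z (char_poly \<rho>)) * eta (Re z))"

definition unitary2 :: "complex mat \<Rightarrow> bool" where
  "unitary2 U \<longleftrightarrow> U \<in> carrier_mat 2 2 \<and> mat_adjoint U * U = 1\<^sub>m 2"

definition idx3 :: "nat \<Rightarrow> nat \<Rightarrow> nat \<Rightarrow> nat \<Rightarrow> nat \<Rightarrow> nat \<Rightarrow> nat" where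
  "idx3 j k l x a b = x * 2 ^ (3 - j) + a * 2 ^ (3 - k) + b * 2 ^ (3 - l)"

(* Tr_j[(A)_j rho] as a two-qubit operator on qubits k (first) and l (second) *)
definition ptrace_j :: "nat \<Rightarrow> nat \<Rightarrow> nat \<Rightarrow> complex mat \<Rightarrow> complex mat \<Rightarrow> complex mat" where
  "ptrace_j j k l A \<rho> = mat 4 4 (\<lambda>(r, c).
      \<Sum>x<2. \<Sum>y<2. A $$ (x, y) *
        \<rho> $$ (idx3 j k l y (r div 2) (r mod 2), idx3 j k l x (c div 2) (c mod 2)))"

definition red_kl :: "nat \<Rightarrow> nat \<Rightarrow> nat \<Rightarrow> complex mat \<Rightarrow> complex mat" where
  "red_kl j k l \<rho> = ptrace_j j k l (1\<^sub>m 2) \<rho>"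

definition red_j :: "nat \<Rightarrow> nat \<Rightarrow> nat \<Rightarrow> complex mat \<Rightarrow> complex mat" where
  "red_j j k l \<rho> = mat 2 2 (\<lambda>(x, y). \<Sum>a<2. \<Sum>b<2. \<rho> $$ (idx3 j k l x a b, idx3 j k l y a b))"

definition red_second :: "complex mat \<Rightarrow> complex mat" where
  "red_second \<sigma> = mat 2 2 (\<lambda>(b, b'). \<Sum>a<2. \<sigma> $$ (2 * a + b, 2 * a + b'))"

definition dc_capacity :: "complex mat \<Rightarrow> real" where
  "dc_capacity \<sigma> = 1 + vN_entropy (red_second \<sigma>) - vN_entropy \<sigma>"

definition meas_proj :: "complex mat \<Rightarrow> nat \<Rightarrow> complex mat" where
  "meas_proj U i = mat_adjoint U * mat 2 2 (\<lambda>(r, c). if r = i \<and> c = i then 1 else 0) * U"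

definition meas_prob :: "nat \<Rightarrow> nat \<Rightarrow> nat \<Rightarrow> complex mat \<Rightarrow> complex mat \<Rightarrow> nat \<Rightarrow> real" where
  "meas_prob j k l \<rho> U i = Re ((U * red_j j k l \<rho> * mat_adjoint U) $$ (i, i))"

definition post_state :: "nat \<Rightarrow> nat \<Rightarrow> nat \<Rightarrow> complex mat \<Rightarrow> complex mat \<Rightarrow> nat \<Rightarrow> complex mat" where
  "post_state j k l \<rho> U i =
     (1 / complex_of_real (meas_prob j k l \<rho> U i)) \<cdot>\<^sub>m ptrace_j j k l (meas_proj U i) \<rho>"

definition avg_capacity :: "nat \<Rightarrow> nat \<Rightarrow> nat \<Rightarrow> complex mat \<Rightarrow> complex mat \<Rightarrow> real" where
  "avg_capacity j k l \<rho> U = (\<Sum>i\<in>{i. i < 2 \<and> meas_prob j k l \<rho> U i \<noteq> 0}.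
       meas_prob j k l \<rho> U i * dc_capacity (post_state j k l \<rho> U i))"

(* C_CD^{jkl}: maximum over all 2x2 unitaries (written as a supremum; the
   maximum is attained by compactness of U(2)) *)
definition cd_capacity :: "nat \<Rightarrow> nat \<Rightarrow> nat \<Rightarrow> complex mat \<Rightarrow> real" where
  "cd_capacity j k l \<rho> = Sup {avg_capacity j k l \<rho> U | U. unitary2 U}"

definition control_power :: "nat \<Rightarrow> nat \<Rightarrow> nat \<Rightarrow> complex mat \<Rightarrow> real" where
  "control_power j k l \<rho> = cd_capacity j k l \<rho> - dc_capacity (red_kl j k l \<rho>)"

definition min_control_power :: "complex mat \<Rightarrow> real" where
  "min_control_power \<rho> = Min {control_power j k l \<rho> | j k l.
      j \<in> {1,2,3} \<and> k \<in> {1,2,3} \<and> l \<in> {1,2,3} \<and> distinct [j, k, l]}"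

definition gW_vec :: "real \<Rightarrow> real \<Rightarrow> real \<Rightarrow> nat \<Rightarrow> real" where
  "gW_vec l1 l2 l3 n = (if n = 4 then l1 else if n = 2 then l2 else if n = 1 then l3 else 0)"

definition gW_state :: "real \<Rightarrow> real \<Rightarrow> real \<Rightarrow> complex mat" where
  "gW_state l1 l2 l3 = mat 8 8 (\<lambda>(r, c). complex_of_real (gW_vec l1 l2 l3 r * gW_vec l1 l2 l3 c))"

definition W_state :: "complex mat" where
  "W_state = gW_state (1 / sqrt 3) (1 / sqrt 3) (1 / sqrt 3)"

end

theory Submission
  imports Defs
begin


lemma order_linear_prod:
  fixes cs :: "complex list"
  shows "order z (\<Prod>c\<leftarrow>cs. [:-c,1:]) = count_list cs z"
proof (induction cs)
  case Nil then show ?case by simp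
next
  case (Cons c cs)
  define P where "P = (\<Prod>c\<leftarrow>cs. [:-c,1:])"
  have nz: "P \<noteq> 0" unfolding P_def
    by (auto simp add: prod_list_zero_iff)
  have l: "[:-c,1:] \<noteq> 0" by simp
  have o1: "order z ([:-c,1:] * P) = order z [:-c,1:] + order z P"
    by (rule order_mult) (simp only: mult_eq_0_iff de_Morgan_disj nz l, simp)
  have o2: "order z [:-c,1:] = (if c = z then 1 else 0)"
    using order_power_n_n[of z 1] by (auto intro!: order_0I)
  have o3: "(\<Prod>c\<leftarrow>c#cs. [:-c,1:]) = [:-c,1:] * P" unfolding P_def by simp
  have o4: "order z P = count_list cs z" using Cons.IH unfolding P_def .
  show ?case unfolding o3 o1 o2 o4 by simp
qed

lemma poly_linear_prod:
  fixes cs :: "complex list"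
  shows "poly (\<Prod>c\<leftarrow>cs. [:-c,1:]) z = 0 \<longleftrightarrow> z \<in> set cs"
  by (induction cs) auto

lemma sum_list_count_real:
  "sum_list (map (f::'a\<Rightarrow>real) xs) = sum (\<lambda>x. real (count_list xs x) * f x) (set xs)"
proof(induction xs)
  case (Cons x xs)
  have a: "\<And>y. real (count_list (x#xs) y) * f y = real (count_list xs y) * f y + (if y = x then f y else 0)"
    by (simp add: distrib_right)
  have b: "(\<Sum>y\<in>insert x (set xs). real (count_list (x#xs) y) * f y)
     = (\<Sum>y\<in>insert x (set xs). real (count_list xs y) * f y) + (\<Sum>y\<in>insert x (set xs). if y = x then f y else 0)"
    unfolding a by (rule sum.distrib)
  have c: "(\<Sum>y\<in>insert x (set xs). if y = x then f y else 0) = f x"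
    by (simp add: sum.delta)
  have d: "(\<Sum>y\<in>insert x (set xs). real (count_list xs y) * f y) = (\<Sum>y\<in>set xs. real (count_list xs y) * f y)"
  proof (cases "x \<in> set xs")
    case True then show ?thesis by (simp add: insert_absorb)
  next
    case False
    then have "count_list xs x = 0" by (simp add: count_list_0_iff)
    then show ?thesis using False by (simp add: sum.insert)
  qed
  show ?case using b c d Cons.IH by simp
qed simp

lemma vN_entropy_factored:
  assumes "char_poly A = (\<Prod>c\<leftarrow>cs. [:-c,1:])"
  shows "vN_entropy A = - (\<Sum>c\<leftarrow>cs. eta (Re c))"
proof -
  have e: "{z. poly (char_poly A) z = 0} = set cs" using assms poly_linear_prod by auto
  show ?thesis unfolding vN_entropy_def e unfolding assms order_linear_prod
    by (subst sum_list_count_real) simp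
qed




lemma M_nonpos:
  fixes w :: real assumes "0 < w" "w \<le> 1"
  shows "(1 - w) * ln (1 + w) + w * ln w \<le> 0"
proof -
  have "ln (1 + w) \<le> w" using assms by (intro ln_add_one_self_le_self) simp
  then have "(1 - w) * ln (1 + w) \<le> (1 - w) * w" using assms by (intro mult_left_mono) auto
  moreover have "ln w \<le> w - 1" using assms by (intro ln_le_minus_one) simp
  then have "w * ln w \<le> w * (w - 1)" using assms by (intro mult_left_mono) auto
  ultimately show ?thesis by (simp add: algebra_simps)
qed

definition gK :: "real \<Rightarrow> real" where
  "gK t = ((1 + t\<^sup>2) * ln (1 + t\<^sup>2) - t\<^sup>2 * ln (t\<^sup>2)) / t"

lemma gK_deriv:
  assumes "0 < t"
  shows "(gK has_real_derivative
    (((t\<^sup>2 - 1) * ln (1 + t\<^sup>2) - t\<^sup>2 * ln (t\<^sup>2)) / t\<^sup>2)) (at t)"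
proof -
  have "0 \<le> t*t" by simp
  then have tt: "1 + t*t \<noteq> 0" by linarith
  have "(gK has_real_derivative
     ((2 * t * ln (1 + t\<^sup>2) + (1 + t\<^sup>2) * (2 * t / (1 + t\<^sup>2)) - (2 * t * ln (t\<^sup>2) + t\<^sup>2 * (2 * t / t\<^sup>2))) * t
       - ((1 + t\<^sup>2) * ln (1 + t\<^sup>2) - t\<^sup>2 * ln (t\<^sup>2))) / (t * t)) (at t)"
    unfolding gK_def using assms tt
    by (auto intro!: derivative_eq_intros simp: power2_eq_square add_pos_pos)
  moreover have "((2 * t * ln (1 + t\<^sup>2) + (1 + t\<^sup>2) * (2 * t / (1 + t\<^sup>2)) - (2 * t * ln (t\<^sup>2) + t\<^sup>2 * (2 * t / t\<^sup>2))) * t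
       - ((1 + t\<^sup>2) * ln (1 + t\<^sup>2) - t\<^sup>2 * ln (t\<^sup>2))) / (t * t)
     = (((t\<^sup>2 - 1) * ln (1 + t\<^sup>2) - t\<^sup>2 * ln (t\<^sup>2)) / t\<^sup>2)"
  proof -
    have p: "1 + t\<^sup>2 > 0" by (simp add: add_pos_nonneg)
    have e1: "(1 + t\<^sup>2) * (2 * t / (1 + t\<^sup>2)) = 2 * t" using p by simp
    have e2: "t\<^sup>2 * (2 * t / t\<^sup>2) = 2 * t" using assms by simp
    show ?thesis
      apply (simp only: e1 e2)
      apply (rule arg_cong2[where f="(/)"])
       apply (simp add: algebra_simps power2_eq_square)
      apply (simp add: power2_eq_square)
      done
  qed
  ultimately show ?thesis by simp
qed

lemma gK_le:
  assumes "0 < t" "t \<le> 1"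
  shows "gK t \<le> 2 * ln 2"
proof -
  have "gK t \<le> gK 1"
  proof (rule DERIV_nonneg_imp_increasing_open[of t 1 gK])
    show "t \<le> 1" by fact
    fix x assume x: "t < x" "x < 1"
    have "(1 - x\<^sup>2) * ln (1 + x\<^sup>2) + x\<^sup>2 * ln (x\<^sup>2) \<le> 0"
      using x assms by (intro M_nonpos) (auto simp: power_le_one)
    then have "((x\<^sup>2 - 1) * ln (1 + x\<^sup>2) - x\<^sup>2 * ln (x\<^sup>2)) / x\<^sup>2 \<ge> 0"
      by (intro divide_nonneg_pos) (use x assms in \<open>auto simp: algebra_simps\<close>)
    then show "\<exists>y. (gK has_real_derivative y) (at x) \<and> 0 \<le> y"
      using gK_deriv[of x] x assms by auto
  next
    show "continuous_on {t..1} gK"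
    proof (rule DERIV_continuous_on)
      fix x assume "x \<in> {t..1}"
      then show "(gK has_field_derivative (((x\<^sup>2 - 1) * ln (1 + x\<^sup>2) - x\<^sup>2 * ln (x\<^sup>2)) / x\<^sup>2)) (at x within {t..1})"
        using gK_deriv[of x] assms by (auto intro: has_field_derivative_at_within)
    qed
  qed
  also have "gK 1 = 2 * ln 2" unfolding gK_def by simp
  finally show ?thesis .
qed

lemma ent_le_half:
  fixes m :: real assumes m: "0 < m" "m \<le> 1/2"
  shows "-(eta m + eta (1 - m)) \<le> 2 * sqrt (m * (1 - m))"
proof -
  define t where "t = sqrt (m / (1 - m))"
  have m1: "0 < 1 - m" using m by simp
  have t2: "t\<^sup>2 = m / (1 - m)" unfolding t_def using m m1 by simp
  have tpos: "0 < t" unfolding t_def using m m1 by simp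
  have "m / (1 - m) \<le> 1" using m m1 by simp
  then have tle: "t \<le> 1" unfolding t_def by simp
  have a: "1 + t\<^sup>2 = 1 / (1 - m)" unfolding t2 using m1 by (simp add: field_simps)
  have la: "ln (1 + t\<^sup>2) = - ln (1 - m)" unfolding a using m1 by (simp add: ln_div)
  have lb: "ln (t\<^sup>2) = ln m - ln (1 - m)" unfolding t2 using m m1 by (simp add: ln_div)
  define E where "E = -(m * ln m + (1 - m) * ln (1 - m))"
  have num: "(1 + t\<^sup>2) * ln (1 + t\<^sup>2) - t\<^sup>2 * ln (t\<^sup>2) = E / (1 - m)"
  proof -
    have "(1 + t\<^sup>2) * ln (1 + t\<^sup>2) - t\<^sup>2 * ln (t\<^sup>2)
        = (1/(1-m))*(-ln(1-m)) - (m/(1-m))*(ln m - ln(1-m))"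
      unfolding la lb unfolding a unfolding t2 ..
    also have "\<dots> = ((-ln(1-m)) - m*(ln m - ln(1-m)))/(1-m)"
      by (simp add: diff_divide_distrib)
    also have "(-ln(1-m)) - m*(ln m - ln(1-m)) = E" unfolding E_def by (simp add: algebra_simps)
    finally show ?thesis .
  qed
  have "gK t \<le> 2 * ln 2" using gK_le tpos tle by simp
  then have "E / (1 - m) / t \<le> 2 * ln 2" unfolding gK_def num .
  then have "E \<le> 2 * ln 2 * ((1 - m) * t)" using tpos m1 by (simp add: field_simps)
  moreover have "(1 - m) * t = sqrt (m * (1 - m))"
  proof -
    have "(1 - m) * t = sqrt ((1 - m)\<^sup>2) * sqrt (m / (1 - m))" unfolding t_def using m1 by simp
    also have "\<dots> = sqrt ((1 - m)\<^sup>2 * (m / (1 - m)))" by (rule real_sqrt_mult[symmetric])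
    also have "(1 - m)\<^sup>2 * (m / (1 - m)) = m * (1 - m)" using m1 by (simp add: power2_eq_square field_simps)
    finally show ?thesis .
  qed
  ultimately have "E \<le> 2 * ln 2 * sqrt (m * (1 - m))" by simp
  then have Eb: "E / ln 2 \<le> 2 * sqrt (m * (1 - m))" by (simp add: pos_divide_le_eq mult_ac)
  have "-(eta m + eta (1 - m)) = E / ln 2"
    unfolding eta_def E_def log_def using m m1 by (simp add: field_simps)
  with Eb show ?thesis by simp
qed

lemma ent_le_conc:
  fixes m :: real assumes m: "0 \<le> m" "m \<le> 1"
  shows "-(eta m + eta (1 - m)) \<le> 2 * sqrt (m * (1 - m))"
proof -
  have e0: "eta 0 = 0" "eta 1 = 0" by (simp_all add: eta_def)
  consider "m = 0" | "m = 1" | "0 < m" "m \<le> 1/2" | "1/2 < m" "m < 1" using m by linarith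
  then show ?thesis
  proof cases
    case 4
    then have "-(eta (1-m) + eta (1 - (1-m))) \<le> 2 * sqrt ((1-m) * (1 - (1-m)))"
      by (intro ent_le_half) auto
    then show ?thesis by (simp add: mult.commute add.commute)
  next
    case 3 then show ?thesis by (rule ent_le_half)
  qed (auto simp: e0)
qed




lemma adj_idx: assumes "U \<in> carrier_mat n m" "i < m" "j < n"
  shows "mat_adjoint U $$ (i, j) = cnj (U $$ (j, i))"
  using assms unfolding mat_adjoint_def by (simp add: mat_of_rows_def)

lemma adj_dim[simp]: "dim_row (mat_adjoint U) = dim_col U" "dim_col (mat_adjoint U) = dim_row U"
  unfolding mat_adjoint_def by simp_all

lemma sum2: "(\<Sum>i<2::nat. f i) = f 0 + (f 1 :: 'a :: comm_monoid_add)"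
  by (simp add: numeral_2_eq_2)
lemma sum4: "(\<Sum>i<4::nat. f i) = f 0 + f 1 + f 2 + (f 3 :: 'a :: comm_monoid_add)"
  by (simp add: numeral_eq_Suc add.assoc)
lemma sum3: "(\<Sum>i<3::nat. f i) = f 0 + f 1 + (f 2 :: 'a :: comm_monoid_add)"
  by (simp add: numeral_eq_Suc add.assoc)

lemma det1: "det (mat (Suc 0) (Suc 0) g) = g (0,0)"
  by (subst det_single) auto

lemma det2: assumes "A \<in> carrier_mat 2 2"
  shows "det A = A $$ (0,0) * A $$ (1,1) - A $$ (0,1) * A $$ (1,0)"
proof -
  have "det A = (\<Sum>i<2. A $$ (i,0) * cofactor A i 0)"
    by (rule laplace_expansion_column[OF assms]) simp
  also have "\<dots> = A $$ (0,0) * A $$ (1,1) - A $$ (0,1) * A $$ (1,0)"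
    unfolding sum2 cofactor_def using assms
    by (simp add: det1 mat_delete_def)
  finally show ?thesis .
qed

lemma lin_mult: "[:-x,1:]*[:-y,1:] = [:x*y, -(x+y), 1::'a::comm_ring_1:]"
  by (simp add: algebra_simps)

lemma char2:
  fixes A :: "complex mat"
  assumes A: "A \<in> carrier_mat 2 2"
    and s: "m1 + m2 = A $$ (0,0) + A $$ (1,1)"
    and p: "m1 * m2 = A $$ (0,0) * A $$ (1,1) - A $$ (0,1) * A $$ (1,0)"
  shows "char_poly A = (\<Prod>c\<leftarrow>[m1,m2]. [:-c,1:])"
proof -
  have "char_poly A = [:-(A $$ (0,0)),1:] * [:-(A $$ (1,1)),1:] - [:-(A $$ (0,1)):] * [:-(A $$ (1,0)):]"
    unfolding char_poly_def
    by (subst det2[of _]) (use A in \<open>auto simp: char_poly_matrix_def\<close>)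
  also have "\<dots> = [:m1*m2, -(m1+m2), 1:]"
    unfolding lin_mult s p by (simp add: algebra_simps)
  also have "\<dots> = (\<Prod>c\<leftarrow>[m1,m2]. [:-c,1:])" using lin_mult[of m1 m2] by simp
  finally show ?thesis .
qed

definition m4 :: "complex \<Rightarrow> complex \<Rightarrow> complex \<Rightarrow> complex \<Rightarrow> complex \<Rightarrow> complex mat" where
  "m4 a p q r s = mat 4 4 (\<lambda>(i,j). if i=0\<and>j=0 then a else if i=1\<and>j=1 then p else if i=2\<and>j=2 then q
     else if i=1\<and>j=2 then r else if i=2\<and>j=1 then s else 0)"

lemma char4:
  assumes pq: "p * q = r * s"
  shows "char_poly (m4 a p q r s) = (\<Prod>c\<leftarrow>[0,0,a,p+q]. [:-c,1:])"
proof -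
  define M where "M = char_poly_matrix (m4 a p q r s)"
  have M: "M \<in> carrier_mat 4 4" unfolding M_def m4_def by simp
  have Me: "\<And>i j. i < 4 \<Longrightarrow> j < 4 \<Longrightarrow> M $$ (i,j) = (if i = j then [:0,1:] else 0) + [:- (m4 a p q r s $$ (i,j)):]"
    unfolding M_def m4_def char_poly_matrix_def by simp
  have "det M = (\<Sum>i<4. M $$ (i,3) * cofactor M i 3)"
    by (rule laplace_expansion_column[OF M]) simp
  also have "\<dots> = [:0,1:] * det (mat_delete M 3 3)"
    unfolding sum4 cofactor_def by (simp add: Me m4_def)
  finally have d1: "det M = [:0,1:] * det (mat_delete M 3 3)" .
  define N where "N = mat_delete M 3 3"
  have N: "N \<in> carrier_mat 3 3" unfolding N_def using mat_delete_carrier[OF M] by simp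
  have Ne: "\<And>i j. i < 3 \<Longrightarrow> j < 3 \<Longrightarrow> N $$ (i,j) = M $$ (i,j)"
    unfolding N_def mat_delete_def using M by auto
  have "det N = (\<Sum>i<3. N $$ (i,0) * cofactor N i 0)"
    by (rule laplace_expansion_column[OF N]) simp
  also have "\<dots> = [:-a,1:] * det (mat_delete N 0 0)"
    unfolding sum3 cofactor_def by (simp add: Ne Me m4_def)
  finally have d2: "det N = [:-a,1:] * det (mat_delete N 0 0)" .
  define K where "K = mat_delete N 0 0"
  have K: "K \<in> carrier_mat 2 2" unfolding K_def using mat_delete_carrier[OF N] by simp
  have Ke: "\<And>i j. i < 2 \<Longrightarrow> j < 2 \<Longrightarrow> K $$ (i,j) = N $$ (Suc i, Suc j)"
    unfolding K_def mat_delete_def using N by auto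
  have "det K = [:-p,1:] * [:-q,1:] - [:-r:] * [:-s:]"
    unfolding det2[OF K] by (simp add: Ke Ne Me m4_def)
  also have "\<dots> = [:0,1:] * [:-(p+q),1:]"
    unfolding lin_mult using pq by (simp add: algebra_simps)
  finally have d3: "det K = [:0,1:] * [:-(p+q),1:]" .
  show ?thesis unfolding char_poly_def M_def[symmetric] d1 N_def[symmetric] d2 K_def[symmetric] d3
    by (simp add: algebra_simps)
qed

lemma idem_vN:
  fixes A :: "complex mat"
  assumes A: "A \<in> carrier_mat n n" and idem: "A * A = A"
  shows "vN_entropy A = 0"
proof -
  have "\<And>z. poly (char_poly A) z = 0 \<Longrightarrow> real (order z (char_poly A)) * eta (Re z) = 0"
  proof -
    fix z assume "poly (char_poly A) z = 0"
    then have "eigenvalue A z" using eigenvalue_root_char_poly[OF A] by simp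
    then obtain v where ev: "eigenvector A v z" unfolding eigenvalue_def by blast
    then have v: "v \<in> carrier_vec n" "v \<noteq> 0\<^sub>v n" "A *\<^sub>v v = z \<cdot>\<^sub>v v"
      unfolding eigenvector_def using A by auto
    have "A *\<^sub>v (A *\<^sub>v v) = (A * A) *\<^sub>v v" using A v by simp
    also have "\<dots> = z \<cdot>\<^sub>v v" using idem v by simp
    finally have e1: "A *\<^sub>v (A *\<^sub>v v) = z \<cdot>\<^sub>v v" .
    have "A *\<^sub>v (A *\<^sub>v v) = (z * z) \<cdot>\<^sub>v v"
      using v A by (simp add: mult_mat_vec smult_smult_assoc)
    with e1 have e: "(z * z) \<cdot>\<^sub>v v = z \<cdot>\<^sub>v v" by simp
    obtain i where i: "i < n" "v $ i \<noteq> 0" using v(1,2)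
      by (metis eq_vecI carrier_vecD index_zero_vec(1,2))
    have "z * z * v $ i = z * v $ i" using arg_cong[OF e, of "\<lambda>w. w $ i"] i v by simp
    then have "z * z = z" using i by simp
    then have "z = 0 \<or> z = 1" by (metis mult_cancel_right1 mult_zero_left)
    then show "real (order z (char_poly A)) * eta (Re z) = 0" by (auto simp: eta_def)
  qed
  then show ?thesis unfolding vN_entropy_def by (simp add: sum.neutral del: mult_eq_0_iff)
qed

lemma outer_idem:
  fixes f :: "nat \<Rightarrow> complex"
  assumes s: "s = (\<Sum>i<n. f i * cnj (f i))" "s \<noteq> 0"
  shows "mat n n (\<lambda>(r,c). f r * cnj (f c) / s) * mat n n (\<lambda>(r,c). f r * cnj (f c) / s)
       = mat n n (\<lambda>(r,c). f r * cnj (f c) / s)"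
proof (rule eq_matI)
  fix r c assume rc: "r < dim_row (mat n n (\<lambda>(r,c). f r * cnj (f c) / s))"
      "c < dim_col (mat n n (\<lambda>(r,c). f r * cnj (f c) / s))"
  then have rc: "r < n" "c < n" by auto
  have "(mat n n (\<lambda>(r,c). f r * cnj (f c) / s) * mat n n (\<lambda>(r,c). f r * cnj (f c) / s)) $$ (r,c)
     = (\<Sum>t\<in>{0..<n}. (f r * cnj (f t) / s) * (f t * cnj (f c) / s))"
    using rc by (simp add: scalar_prod_def)
  also have "\<dots> = (f r * cnj (f c) / (s*s)) * (\<Sum>t<n. f t * cnj (f t))"
    by (simp add: sum_distrib_left sum_divide_distrib atLeast0LessThan field_simps)
  also have "\<dots> = f r * cnj (f c) / s" using s by (simp add: field_simps)
  finally show "(mat n n (\<lambda>(r,c). f r * cnj (f c) / s) * mat n n (\<lambda>(r,c). f r * cnj (f c) / s)) $$ (r,c)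
     = mat n n (\<lambda>(r,c). f r * cnj (f c) / s) $$ (r,c)" using rc by simp
qed auto

lemma ent2:
  fixes B :: "complex mat"
  assumes B: "B \<in> carrier_mat 2 2"
    and b0: "B $$ (0,0) = complex_of_real a" and b1: "B $$ (1,1) = complex_of_real d"
    and bq: "B $$ (0,1) * B $$ (1,0) = complex_of_real q"
    and ad: "a + d = 1" and q: "q \<ge> 0" and D: "a * d - q \<ge> 0"
  shows "vN_entropy B = -(eta ((1 - sqrt (1 - 4 * (a*d - q))) / 2) + eta (1 - (1 - sqrt (1 - 4 * (a*d - q))) / 2))"
    and "vN_entropy B \<le> 2 * sqrt (a * d - q)"
proof -
  define D where "D = a * d - q"
  define m where "m = (1 - sqrt (1 - 4 * D)) / 2"
  have "1 - 4 * D = (a + d)\<^sup>2 - 4 * (a * d - q)" using ad unfolding D_def by simp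
  also have "\<dots> = (a - d)\<^sup>2 + 4 * q" by (simp add: power2_eq_square algebra_simps)
  finally have "1 - 4 * D = (a - d)\<^sup>2 + 4 * q" .
  then have nn: "1 - 4 * D \<ge> 0" using q by simp
  have sq: "(sqrt (1 - 4 * D))\<^sup>2 = 1 - 4 * D" using nn by simp
  have mm: "m * (1 - m) = D" unfolding m_def
    using sq by (simp add: power2_eq_square algebra_simps) (simp add: field_simps)
  have "char_poly B = (\<Prod>c\<leftarrow>[complex_of_real m, complex_of_real (1 - m)]. [:-c,1:])"
  proof (rule char2[OF B])
    show "complex_of_real m + complex_of_real (1 - m) = B $$ (0, 0) + B $$ (1, 1)"
      unfolding b0 b1 using ad by (simp flip: of_real_add)
    show "complex_of_real m * complex_of_real (1 - m) = B $$ (0, 0) * B $$ (1, 1) - B $$ (0, 1) * B $$ (1, 0)"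
      unfolding b0 b1 bq using mm unfolding D_def by (simp flip: of_real_mult of_real_diff)
  qed
  from vN_entropy_factored[OF this] have e: "vN_entropy B = -(eta m + eta (1 - m))" by simp
  then show "vN_entropy B = -(eta ((1 - sqrt (1 - 4 * (a*d - q))) / 2) + eta (1 - (1 - sqrt (1 - 4 * (a*d - q))) / 2))"
    unfolding m_def D_def .
  have D0: "0 \<le> D" using D unfolding D_def .
  have s1: "sqrt (1 - 4 * D) \<le> 1" using D0 by simp
  have s0: "0 \<le> sqrt (1 - 4 * D)" using nn by simp
  have gen: "\<And>x::real. 0 \<le> x \<Longrightarrow> x \<le> 1 \<Longrightarrow> 0 \<le> (1-x)/2 \<and> (1-x)/2 \<le> 1" by auto
  from gen[OF s0 s1] have "0 \<le> m" "m \<le> 1" unfolding m_def by auto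
  then have "-(eta m + eta (1 - m)) \<le> 2 * sqrt (m * (1 - m))" by (rule ent_le_conc)
  then show "vN_entropy B \<le> 2 * sqrt (a * d - q)" using e mm unfolding D_def by simp
qed




definition ql :: "real \<Rightarrow> real \<Rightarrow> real \<Rightarrow> nat \<Rightarrow> real" where
  "ql l1 l2 l3 i = (if i = 1 then l1 else if i = 2 then l2 else l3)"

definition perm3 :: "nat \<Rightarrow> nat \<Rightarrow> nat \<Rightarrow> bool" where
  "perm3 j k l \<longleftrightarrow> j \<in> {1,2,3} \<and> k \<in> {1,2,3} \<and> l \<in> {1,2,3} \<and> distinct [j,k,l]"

definition phi :: "real \<Rightarrow> real \<Rightarrow> real \<Rightarrow> nat \<Rightarrow> nat \<Rightarrow> real" where
  "phi A B C y r = (if y = 1 \<and> r = 0 then A else if y = 0 \<and> r = 2 then B else if y = 0 \<and> r = 1 then C else 0)"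

lemma zcnj: "z * cnj z = (complex_of_real (cmod z))\<^sup>2"
  using complex_norm_square[of z] by simp

lemma perm3_cases:
  assumes "perm3 j k l"
  shows "(j,k,l) \<in> {(1,2,3),(1,3,2),(2,1,3),(2,3,1),(3,1,2),(3,2,1)}"
  using assms unfolding perm3_def by auto

lemma lt2: "(x::nat) < 2 \<longleftrightarrow> x = 0 \<or> x = 1" by auto
lemma lt4: "(x::nat) < 4 \<longleftrightarrow> x = 0 \<or> x = 1 \<or> x = 2 \<or> x = 3" by auto

lemma gW_idx:
  assumes p: "perm3 j k l" and x: "x < 2" and a: "a < 2" and b: "b < 2"
  shows "idx3 j k l x a b < 8"
    "gW_vec l1 l2 l3 (idx3 j k l x a b) = phi (ql l1 l2 l3 j) (ql l1 l2 l3 k) (ql l1 l2 l3 l) x (2*a+b)"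
proof -
  from perm3_cases[OF p] have c: "(j=1\<and>k=2\<and>l=3) \<or> (j=1\<and>k=3\<and>l=2) \<or> (j=2\<and>k=1\<and>l=3) \<or> (j=2\<and>k=3\<and>l=1) \<or> (j=3\<and>k=1\<and>l=2) \<or> (j=3\<and>k=2\<and>l=1)"
    by simp
  from x a b have xab: "x = 0 \<or> x = 1" "a = 0 \<or> a = 1" "b = 0 \<or> b = 1" by auto
  show "idx3 j k l x a b < 8"
    using c xab by (elim disjE conjE; simp add: idx3_def)
  show "gW_vec l1 l2 l3 (idx3 j k l x a b) = phi (ql l1 l2 l3 j) (ql l1 l2 l3 k) (ql l1 l2 l3 l) x (2*a+b)"
    using c xab by (elim disjE conjE; simp add: idx3_def gW_vec_def phi_def ql_def)
qed

lemma gW_idx2: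
  assumes p: "perm3 j k l" and x: "x < 2" and r: "r < 4"
  shows "idx3 j k l x (r div 2) (r mod 2) < 8"
    "gW_vec l1 l2 l3 (idx3 j k l x (r div 2) (r mod 2)) = phi (ql l1 l2 l3 j) (ql l1 l2 l3 k) (ql l1 l2 l3 l) x r"
proof -
  have "r div 2 < 2" "r mod 2 < 2" using r by auto
  moreover have "2 * (r div 2) + r mod 2 = r" by simp
  ultimately show "idx3 j k l x (r div 2) (r mod 2) < 8"
    "gW_vec l1 l2 l3 (idx3 j k l x (r div 2) (r mod 2)) = phi (ql l1 l2 l3 j) (ql l1 l2 l3 k) (ql l1 l2 l3 l) x r"
    using gW_idx(1)[OF p x, where a="r div 2" and b="r mod 2"] gW_idx(2)[OF p x, of "r div 2" "r mod 2" l1 l2 l3] by auto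
qed

locale gw =
  fixes l1 l2 l3 :: real and j k l :: nat
  assumes p: "perm3 j k l"
begin

abbreviation "A \<equiv> ql l1 l2 l3 j"
abbreviation "B \<equiv> ql l1 l2 l3 k"
abbreviation "C \<equiv> ql l1 l2 l3 l"

lemma gW_entry:
  assumes "y < 2" "r < 4" "x < 2" "c < 4"
  shows "gW_state l1 l2 l3 $$ (idx3 j k l y (r div 2) (r mod 2), idx3 j k l x (c div 2) (c mod 2))
     = complex_of_real (phi A B C y r * phi A B C x c)"
  using gW_idx2[OF p] assms unfolding gW_state_def by simp

lemma gW_entry':
  assumes "x < 2" "a < 2" "b < 2" "y < 2" "a' < 2" "b' < 2"
  shows "gW_state l1 l2 l3 $$ (idx3 j k l x a b, idx3 j k l y a' b')
     = complex_of_real (phi A B C x (2*a+b) * phi A B C y (2*a'+b'))"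
  using gW_idx[OF p] assms unfolding gW_state_def by simp

lemma red_kl_gW:
  "red_kl j k l (gW_state l1 l2 l3) = m4 (of_real (A\<^sup>2)) (of_real (C\<^sup>2)) (of_real (B\<^sup>2)) (of_real (C*B)) (of_real (B*C))"
proof (rule eq_matI)
  fix r c assume rc: "r < dim_row (m4 (of_real (A\<^sup>2)) (of_real (C\<^sup>2)) (of_real (B\<^sup>2)) (of_real (C*B)) (of_real (B*C)))"
    "c < dim_col (m4 (of_real (A\<^sup>2)) (of_real (C\<^sup>2)) (of_real (B\<^sup>2)) (of_real (C*B)) (of_real (B*C)))"
  then have rc: "r < 4" "c < 4" by (auto simp: m4_def)
  have "red_kl j k l (gW_state l1 l2 l3) $$ (r,c) = of_real (phi A B C 0 r * phi A B C 0 c + phi A B C 1 r * phi A B C 1 c)"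
    unfolding red_kl_def ptrace_j_def using rc by (simp add: sum2 gW_entry)
  then show "red_kl j k l (gW_state l1 l2 l3) $$ (r,c) = m4 (of_real (A\<^sup>2)) (of_real (C\<^sup>2)) (of_real (B\<^sup>2)) (of_real (C*B)) (of_real (B*C)) $$ (r,c)"
    using rc unfolding lt4 by (elim disjE; simp add: m4_def phi_def power2_eq_square)
qed (auto simp: red_kl_def ptrace_j_def m4_def)

lemma sumsq: "A\<^sup>2 + B\<^sup>2 + C\<^sup>2 = l1\<^sup>2 + l2\<^sup>2 + l3\<^sup>2"
  using perm3_cases[OF p] by (auto simp: ql_def)

lemma red_j_gW:
  "red_j j k l (gW_state l1 l2 l3) = mat 2 2 (\<lambda>(x,y). if x = 0 \<and> y = 0 then of_real (B\<^sup>2 + C\<^sup>2)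
      else if x = 1 \<and> y = 1 then of_real (A\<^sup>2) else 0)"
proof (rule eq_matI)
  fix x y assume "x < dim_row (mat 2 2 (\<lambda>(x,y). if x = 0 \<and> y = 0 then complex_of_real (B\<^sup>2 + C\<^sup>2)
      else if x = 1 \<and> y = 1 then of_real (A\<^sup>2) else 0))" "y < dim_col (mat 2 2 (\<lambda>(x,y). if x = 0 \<and> y = 0 then complex_of_real (B\<^sup>2 + C\<^sup>2)
      else if x = 1 \<and> y = 1 then of_real (A\<^sup>2) else 0))"
  then have xy: "x < 2" "y < 2" by auto
  then show "red_j j k l (gW_state l1 l2 l3) $$ (x,y) = mat 2 2 (\<lambda>(x,y). if x = 0 \<and> y = 0 then complex_of_real (B\<^sup>2 + C\<^sup>2)
      else if x = 1 \<and> y = 1 then of_real (A\<^sup>2) else 0) $$ (x,y)"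
    unfolding red_j_def using xy unfolding lt2
    by (elim disjE; simp add: sum2 gW_entry' phi_def power2_eq_square)
qed (auto simp: red_j_def)

lemma meas_prob_gW:
  assumes U: "U \<in> carrier_mat 2 2" and i: "i < 2"
  shows "meas_prob j k l (gW_state l1 l2 l3) U i = (cmod (U $$ (i,0)))\<^sup>2 * (B\<^sup>2 + C\<^sup>2) + (cmod (U $$ (i,1)))\<^sup>2 * A\<^sup>2"
proof -
  have "(U * red_j j k l (gW_state l1 l2 l3) * mat_adjoint U) $$ (i,i)
     = U $$ (i,0) * cnj (U $$ (i,0)) * of_real (B\<^sup>2 + C\<^sup>2) + U $$ (i,1) * cnj (U $$ (i,1)) * of_real (A\<^sup>2)"
    unfolding red_j_gW using U i
    by (simp add: scalar_prod_def atLeast0LessThan sum2 adj_idx algebra_simps)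
  also have "\<dots> = of_real ((cmod (U $$ (i,0)))\<^sup>2 * (B\<^sup>2 + C\<^sup>2) + (cmod (U $$ (i,1)))\<^sup>2 * A\<^sup>2)"
    by (simp add: zcnj)
  finally show ?thesis unfolding meas_prob_def by simp
qed

lemma meas_proj_idx:
  assumes U: "U \<in> carrier_mat 2 2" and i: "i < 2" and xy: "x < 2" "y < 2"
  shows "meas_proj U i $$ (x,y) = cnj (U $$ (i,x)) * U $$ (i,y)"
  unfolding meas_proj_def using U i xy unfolding lt2
  by (elim disjE; simp add: scalar_prod_def atLeast0LessThan sum2 adj_idx)

definition vv :: "complex mat \<Rightarrow> nat \<Rightarrow> nat \<Rightarrow> complex" where
  "vv U i r = U $$ (i,0) * of_real (phi A B C 0 r) + U $$ (i,1) * of_real (phi A B C 1 r)"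

lemma ptrace_gW:
  assumes U: "U \<in> carrier_mat 2 2" and i: "i < 2"
  shows "ptrace_j j k l (meas_proj U i) (gW_state l1 l2 l3) = mat 4 4 (\<lambda>(r,c). vv U i r * cnj (vv U i c))"
proof (rule eq_matI)
  fix r c assume "r < dim_row (mat 4 4 (\<lambda>(r,c). vv U i r * cnj (vv U i c)))"
    "c < dim_col (mat 4 4 (\<lambda>(r,c). vv U i r * cnj (vv U i c)))"
  then have rc: "r < 4" "c < 4" by auto
  then show "ptrace_j j k l (meas_proj U i) (gW_state l1 l2 l3) $$ (r,c) = mat 4 4 (\<lambda>(r,c). vv U i r * cnj (vv U i c)) $$ (r,c)"
    unfolding ptrace_j_def vv_def using U i
    by (simp add: sum2 gW_entry meas_proj_idx algebra_simps)
qed (auto simp: ptrace_j_def)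

end




lemma red_second_idx:
  assumes "b < 2" "b' < 2"
  shows "red_second \<sigma> $$ (b,b') = \<sigma> $$ (b,b') + \<sigma> $$ (2+b, 2+b')"
  unfolding red_second_def using assms by (simp add: sum2)

lemma zx_sq: "z * of_real x * cnj (z * of_real x) = complex_of_real ((cmod z)\<^sup>2 * x\<^sup>2)"
proof -
  have "z * of_real x * cnj (z * of_real x) = (z * cnj z) * (of_real x)\<^sup>2"
    by (simp add: power2_eq_square mult_ac)
  also have "\<dots> = complex_of_real ((cmod z)\<^sup>2 * x\<^sup>2)" unfolding zcnj by simp
  finally show ?thesis .
qed

lemma rs_vals: "red_second \<sigma> $$ (0,0) = \<sigma> $$ (0,0) + \<sigma> $$ (2,2)"
  "red_second \<sigma> $$ (1,1) = \<sigma> $$ (1,1) + \<sigma> $$ (3,3)"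
  "red_second \<sigma> $$ (0,1) = \<sigma> $$ (0,1) + \<sigma> $$ (2,3)"
  "red_second \<sigma> $$ (1,0) = \<sigma> $$ (1,0) + \<sigma> $$ (3,2)"
  using red_second_idx[of 0 0 \<sigma>] red_second_idx[of 1 1 \<sigma>] red_second_idx[of 0 1 \<sigma>] red_second_idx[of 1 0 \<sigma>]
  by simp_all

lemma unitary_cols:
  assumes "unitary2 U"
  shows "(cmod (U $$ (0,0)))\<^sup>2 + (cmod (U $$ (1,0)))\<^sup>2 = 1"
    "(cmod (U $$ (0,1)))\<^sup>2 + (cmod (U $$ (1,1)))\<^sup>2 = 1"
proof -
  have U: "U \<in> carrier_mat 2 2" and e: "mat_adjoint U * U = 1\<^sub>m 2" using assms unfolding unitary2_def by auto
  have "complex_of_real ((cmod (U $$ (0,0)))\<^sup>2 + (cmod (U $$ (1,0)))\<^sup>2) = (mat_adjoint U * U) $$ (0,0)"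
    using U by (simp add: scalar_prod_def atLeast0LessThan sum2 adj_idx mult.commute[of "cnj _"] zcnj)
  also have "\<dots> = 1" unfolding e by simp
  finally show "(cmod (U $$ (0,0)))\<^sup>2 + (cmod (U $$ (1,0)))\<^sup>2 = 1" using of_real_eq_1_iff by blast
  have "complex_of_real ((cmod (U $$ (0,1)))\<^sup>2 + (cmod (U $$ (1,1)))\<^sup>2) = (mat_adjoint U * U) $$ (1,1)"
    using U by (simp add: scalar_prod_def atLeast0LessThan sum2 adj_idx mult.commute[of "cnj _"] zcnj)
  also have "\<dots> = 1" unfolding e by simp
  finally show "(cmod (U $$ (0,1)))\<^sup>2 + (cmod (U $$ (1,1)))\<^sup>2 = 1" using of_real_eq_1_iff by blast
qed

lemma unitary_one: "unitary2 (1\<^sub>m 2)"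
proof -
  have "mat_adjoint (1\<^sub>m 2) = (1\<^sub>m 2 :: complex mat)"
    by (rule eq_matI) (auto simp: adj_idx[of "1\<^sub>m 2" 2 2])
  then show ?thesis unfolding unitary2_def by simp
qed

context gw begin

lemma vv_vals: "vv U i 0 = U $$ (i,1) * of_real A" "vv U i 1 = U $$ (i,0) * of_real C"
  "vv U i 2 = U $$ (i,0) * of_real B" "vv U i 3 = 0"
  "vv U i (Suc 0) = U $$ (i,0) * of_real C" "vv U i (Suc (Suc (Suc 0))) = 0"
  unfolding vv_def phi_def by simp_all

lemma post_gW:
  assumes U: "U \<in> carrier_mat 2 2" and i: "i < 2"
  shows "post_state j k l (gW_state l1 l2 l3) U i =
     mat 4 4 (\<lambda>(r,c). vv U i r * cnj (vv U i c) / of_real (meas_prob j k l (gW_state l1 l2 l3) U i))"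
  unfolding post_state_def ptrace_gW[OF U i]
  by (rule eq_matI) auto

lemma sum_vv:
  assumes U: "U \<in> carrier_mat 2 2" and i: "i < 2"
  shows "(\<Sum>r<4. vv U i r * cnj (vv U i r)) = of_real (meas_prob j k l (gW_state l1 l2 l3) U i)"
  unfolding meas_prob_gW[OF U i] sum4 vv_vals zx_sq
  by (simp add: algebra_simps)

lemma vN_post:
  assumes U: "U \<in> carrier_mat 2 2" and i: "i < 2" and p0: "meas_prob j k l (gW_state l1 l2 l3) U i \<noteq> 0"
  shows "vN_entropy (post_state j k l (gW_state l1 l2 l3) U i) = 0"
proof -
  have "mat 4 4 (\<lambda>(r,c). vv U i r * cnj (vv U i c) / of_real (meas_prob j k l (gW_state l1 l2 l3) U i)) *
        mat 4 4 (\<lambda>(r,c). vv U i r * cnj (vv U i c) / of_real (meas_prob j k l (gW_state l1 l2 l3) U i))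
      = mat 4 4 (\<lambda>(r,c). vv U i r * cnj (vv U i c) / of_real (meas_prob j k l (gW_state l1 l2 l3) U i))"
    by (rule outer_idem) (use sum_vv[OF U i] p0 in auto)
  then show ?thesis unfolding post_gW[OF U i] by (intro idem_vN[of _ 4]) auto
qed

lemma rs_post:
  assumes U: "U \<in> carrier_mat 2 2" and i: "i < 2"
  defines "P \<equiv> meas_prob j k l (gW_state l1 l2 l3) U i"
  shows "red_second (post_state j k l (gW_state l1 l2 l3) U i) \<in> carrier_mat 2 2"
    "red_second (post_state j k l (gW_state l1 l2 l3) U i) $$ (0,0) = of_real (((cmod (U $$ (i,1)))\<^sup>2 * A\<^sup>2 + (cmod (U $$ (i,0)))\<^sup>2 * B\<^sup>2) / P)"
    "red_second (post_state j k l (gW_state l1 l2 l3) U i) $$ (1,1) = of_real ((cmod (U $$ (i,0)))\<^sup>2 * C\<^sup>2 / P)"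
    "red_second (post_state j k l (gW_state l1 l2 l3) U i) $$ (0,1) * red_second (post_state j k l (gW_state l1 l2 l3) U i) $$ (1,0)
       = of_real (((cmod (U $$ (i,1)))\<^sup>2 * A\<^sup>2) * ((cmod (U $$ (i,0)))\<^sup>2 * C\<^sup>2) / P\<^sup>2)"
proof -
  show "red_second (post_state j k l (gW_state l1 l2 l3) U i) \<in> carrier_mat 2 2"
    unfolding red_second_def by simp
  have e: "\<And>r c. r < 4 \<Longrightarrow> c < 4 \<Longrightarrow> post_state j k l (gW_state l1 l2 l3) U i $$ (r,c)
     = vv U i r * cnj (vv U i c) / of_real P"
    unfolding post_gW[OF U i] P_def by simp
  have lts: "(0::nat)<4" "(1::nat)<4" "(2::nat)<4" "(3::nat)<4" by simp_all
  show "red_second (post_state j k l (gW_state l1 l2 l3) U i) $$ (0,0) = of_real (((cmod (U $$ (i,1)))\<^sup>2 * A\<^sup>2 + (cmod (U $$ (i,0)))\<^sup>2 * B\<^sup>2) / P)"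
    unfolding rs_vals e[OF lts(1) lts(1)] e[OF lts(3) lts(3)] vv_vals zx_sq by (simp add: add_divide_distrib)
  show "red_second (post_state j k l (gW_state l1 l2 l3) U i) $$ (1,1) = of_real ((cmod (U $$ (i,0)))\<^sup>2 * C\<^sup>2 / P)"
    unfolding rs_vals e[OF lts(2) lts(2)] e[OF lts(4) lts(4)] vv_vals zx_sq by simp
  have "red_second (post_state j k l (gW_state l1 l2 l3) U i) $$ (0,1) * red_second (post_state j k l (gW_state l1 l2 l3) U i) $$ (1,0)
     = (vv U i 0 * cnj (vv U i 1)) * (vv U i 1 * cnj (vv U i 0)) / (of_real P)\<^sup>2"
    unfolding rs_vals e[OF lts(1) lts(2)] e[OF lts(3) lts(4)] e[OF lts(2) lts(1)] e[OF lts(4) lts(3)] vv_vals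
    by (simp add: power2_eq_square)
  also have "\<dots> = (vv U i 0 * cnj (vv U i 0)) * (vv U i 1 * cnj (vv U i 1)) / (of_real P)\<^sup>2"
    by (simp add: mult_ac)
  also have "\<dots> = of_real (((cmod (U $$ (i,1)))\<^sup>2 * A\<^sup>2) * ((cmod (U $$ (i,0)))\<^sup>2 * C\<^sup>2) / P\<^sup>2)"
    unfolding vv_vals zx_sq by (simp add: power_divide)
  finally show "red_second (post_state j k l (gW_state l1 l2 l3) U i) $$ (0,1) * red_second (post_state j k l (gW_state l1 l2 l3) U i) $$ (1,0)
       = of_real (((cmod (U $$ (i,1)))\<^sup>2 * A\<^sup>2) * ((cmod (U $$ (i,0)))\<^sup>2 * C\<^sup>2) / P\<^sup>2)" .
qed

lemma dc_post:
  assumes U: "U \<in> carrier_mat 2 2" and i: "i < 2"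
    and P0: "meas_prob j k l (gW_state l1 l2 l3) U i \<noteq> 0"
    and B0: "0 \<le> B" and C0: "0 \<le> C"
  defines "P \<equiv> meas_prob j k l (gW_state l1 l2 l3) U i"
  defines "n0 \<equiv> (cmod (U $$ (i,0)))\<^sup>2"
  shows "dc_capacity (post_state j k l (gW_state l1 l2 l3) U i) =
      1 - (eta ((1 - sqrt (1 - 4 * (n0 * B * C / P)\<^sup>2)) / 2) + eta (1 - (1 - sqrt (1 - 4 * (n0 * B * C / P)\<^sup>2)) / 2))"
    "dc_capacity (post_state j k l (gW_state l1 l2 l3) U i) \<le> 1 + 2 * n0 * B * C / P"
proof -
  define n1 where "n1 = (cmod (U $$ (i,1)))\<^sup>2"
  have Pe: "P = n0 * (B\<^sup>2 + C\<^sup>2) + n1 * A\<^sup>2" unfolding P_def n0_def n1_def by (rule meas_prob_gW[OF U i])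
  have Pnz: "P \<noteq> 0" using P0 unfolding P_def .
  have Pge: "P \<ge> 0" unfolding Pe n0_def n1_def by simp
  have Ppos: "P > 0" using Pnz Pge by simp
  note rs = rs_post[OF U i, folded P_def n0_def n1_def]
  define a where "a = (n1 * A\<^sup>2 + n0 * B\<^sup>2) / P"
  define d where "d = n0 * C\<^sup>2 / P"
  define q where "q = (n1 * A\<^sup>2) * (n0 * C\<^sup>2) / P\<^sup>2"
  have "a + d = (n1 * A\<^sup>2 + n0 * B\<^sup>2 + n0 * C\<^sup>2) / P" unfolding a_def d_def by (simp add: add_divide_distrib)
  also have "n1 * A\<^sup>2 + n0 * B\<^sup>2 + n0 * C\<^sup>2 = P" unfolding Pe by (simp add: algebra_simps)
  finally have ad: "a + d = 1" using Pnz by simp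
  have q0: "q \<ge> 0" unfolding q_def n0_def n1_def by simp
  have D: "a * d - q = (n0 * B * C / P)\<^sup>2"
    unfolding a_def d_def q_def using Pnz by (simp add: field_simps power2_eq_square)
  have D0: "a * d - q \<ge> 0" unfolding D by simp
  note E = ent2[OF rs(1) rs(2)[folded a_def] rs(3)[folded d_def] rs(4)[folded q_def] ad q0 D0]
  have vp: "vN_entropy (post_state j k l (gW_state l1 l2 l3) U i) = 0" by (rule vN_post[OF U i P0])
  have sq: "sqrt (a * d - q) = n0 * B * C / P" unfolding D using B0 C0 Ppos unfolding n0_def by simp
  show "dc_capacity (post_state j k l (gW_state l1 l2 l3) U i) =
      1 - (eta ((1 - sqrt (1 - 4 * (n0 * B * C / P)\<^sup>2)) / 2) + eta (1 - (1 - sqrt (1 - 4 * (n0 * B * C / P)\<^sup>2)) / 2))"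
    unfolding dc_capacity_def vp E(1) D by simp
  show "dc_capacity (post_state j k l (gW_state l1 l2 l3) U i) \<le> 1 + 2 * n0 * B * C / P"
    unfolding dc_capacity_def vp using E(2) unfolding sq by simp
qed

lemma avg_le:
  assumes U: "unitary2 U" and B0: "0 \<le> B" and C0: "0 \<le> C" and s1: "A\<^sup>2 + B\<^sup>2 + C\<^sup>2 = 1"
  shows "avg_capacity j k l (gW_state l1 l2 l3) U \<le> 1 + 2 * B * C"
proof -
  have Uc: "U \<in> carrier_mat 2 2" using U unfolding unitary2_def by auto
  define P where "P i = meas_prob j k l (gW_state l1 l2 l3) U i" for i
  define n0 where "n0 i = (cmod (U $$ (i,0)))\<^sup>2" for i
  define f where "f i = P i + 2 * n0 i * B * C" for i
  have Pe: "\<And>i. i < 2 \<Longrightarrow> P i = n0 i * (B\<^sup>2 + C\<^sup>2) + (cmod (U $$ (i,1)))\<^sup>2 * A\<^sup>2"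
    unfolding P_def n0_def by (rule meas_prob_gW[OF Uc])
  have fnn: "\<And>i. i < 2 \<Longrightarrow> 0 \<le> f i" unfolding f_def using Pe B0 C0 unfolding n0_def by simp
  have tm: "\<And>i. i \<in> {i. i < 2 \<and> P i \<noteq> 0} \<Longrightarrow>
     P i * dc_capacity (post_state j k l (gW_state l1 l2 l3) U i) \<le> f i"
  proof -
    fix i assume "i \<in> {i. i < 2 \<and> P i \<noteq> 0}"
    then have i: "i < 2" and P0: "P i \<noteq> 0" by auto
    have "P i \<ge> 0" using Pe[OF i] unfolding n0_def by simp
    then have Pp: "P i > 0" using P0 by simp
    have "dc_capacity (post_state j k l (gW_state l1 l2 l3) U i) \<le> 1 + 2 * n0 i * B * C / P i"
      using dc_post(2)[OF Uc i P0[unfolded P_def] B0 C0] unfolding P_def n0_def .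
    then have "P i * dc_capacity (post_state j k l (gW_state l1 l2 l3) U i) \<le> P i * (1 + 2 * n0 i * B * C / P i)"
      using Pp by (intro mult_left_mono) auto
    also have "\<dots> = f i" unfolding f_def using Pp by (simp add: field_simps)
    finally show "P i * dc_capacity (post_state j k l (gW_state l1 l2 l3) U i) \<le> f i" .
  qed
  have "avg_capacity j k l (gW_state l1 l2 l3) U = (\<Sum>i\<in>{i. i < 2 \<and> P i \<noteq> 0}. P i * dc_capacity (post_state j k l (gW_state l1 l2 l3) U i))"
    unfolding avg_capacity_def P_def ..
  also have "\<dots> \<le> (\<Sum>i\<in>{i. i < 2 \<and> P i \<noteq> 0}. f i)" by (rule sum_mono) (rule tm)
  also have "\<dots> \<le> (\<Sum>i<2. f i)" by (rule sum_mono2) (auto intro: fnn)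
  also have "\<dots> = 1 + 2 * B * C"
  proof -
    have "(\<Sum>i<2. f i) = (n0 0 + n0 1) * (B\<^sup>2 + C\<^sup>2) + ((cmod (U $$ (0,1)))\<^sup>2 + (cmod (U $$ (1,1)))\<^sup>2) * A\<^sup>2
        + 2 * (n0 0 + n0 1) * B * C"
      unfolding sum2 f_def using Pe[of 0] Pe[of 1] by (simp add: algebra_simps)
    also have "\<dots> = 1 + 2 * B * C" using unitary_cols[OF U] s1 unfolding n0_def by (simp add: algebra_simps)
    finally show ?thesis .
  qed
  finally show ?thesis .
qed

lemma cd_le:
  assumes B0: "0 \<le> B" and C0: "0 \<le> C" and s1: "A\<^sup>2 + B\<^sup>2 + C\<^sup>2 = 1"
  shows "cd_capacity j k l (gW_state l1 l2 l3) \<le> 1 + 2 * B * C"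
  unfolding cd_capacity_def
  by (rule cSup_least) (use unitary_one avg_le[OF _ B0 C0 s1] in auto)

lemma dc_redkl:
  "dc_capacity (red_kl j k l (gW_state l1 l2 l3)) = 1 - (eta (A\<^sup>2 + B\<^sup>2) + eta (C\<^sup>2)) + (eta (A\<^sup>2) + eta (B\<^sup>2 + C\<^sup>2))"
proof -
  have c4: "char_poly (red_kl j k l (gW_state l1 l2 l3)) = (\<Prod>c\<leftarrow>[0,0,of_real (A\<^sup>2),of_real (C\<^sup>2) + of_real (B\<^sup>2)]. [:-c,1:])"
    unfolding red_kl_gW by (rule char4) (simp add: power2_eq_square)
  have v1: "vN_entropy (red_kl j k l (gW_state l1 l2 l3)) = -(eta (A\<^sup>2) + eta (B\<^sup>2 + C\<^sup>2))"
    using vN_entropy_factored[OF c4] by (simp add: eta_def add.commute)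
  have R: "red_second (red_kl j k l (gW_state l1 l2 l3)) \<in> carrier_mat 2 2" unfolding red_second_def by simp
  have "char_poly (red_second (red_kl j k l (gW_state l1 l2 l3))) = (\<Prod>c\<leftarrow>[of_real (A\<^sup>2 + B\<^sup>2), of_real (C\<^sup>2)]. [:-c,1:])"
    by (rule char2[OF R]) (simp_all add: red_second_idx red_kl_gW m4_def)
  from vN_entropy_factored[OF this]
  have v2: "vN_entropy (red_second (red_kl j k l (gW_state l1 l2 l3))) = -(eta (A\<^sup>2 + B\<^sup>2) + eta (C\<^sup>2))" by simp
  show ?thesis unfolding dc_capacity_def v1 v2 by simp
qed

lemma cd_W:
  assumes a: "A = 1 / sqrt 3" and b: "B = 1 / sqrt 3" and c: "C = 1 / sqrt 3"
  shows "cd_capacity j k l (gW_state l1 l2 l3) = 5 / 3"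
proof -
  have A2: "A\<^sup>2 = 1/3" "B\<^sup>2 = 1/3" "C\<^sup>2 = 1/3" unfolding a b c by (simp_all add: power_divide)
  have BC: "B * C = 1/3" unfolding b c by simp
  have B0: "0 \<le> B" "0 \<le> C" unfolding b c by simp_all
  have s1: "A\<^sup>2 + B\<^sup>2 + C\<^sup>2 = 1" using A2 by simp
  define I where "I = (1\<^sub>m 2 :: complex mat)"
  have Ic: "I \<in> carrier_mat 2 2" unfolding I_def by simp
  have P0: "meas_prob j k l (gW_state l1 l2 l3) I 0 = 2/3"
    using meas_prob_gW[OF Ic, of 0] unfolding I_def using A2 by simp
  have P1: "meas_prob j k l (gW_state l1 l2 l3) I 1 = 1/3"
    using meas_prob_gW[OF Ic, of 1] unfolding I_def using A2 by simp
  have d0: "dc_capacity (post_state j k l (gW_state l1 l2 l3) I 0) = 2"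
  proof -
    have h: "(1::real) - 4 * (1/2)\<^sup>2 = 0" by (simp add: power2_eq_square)
    have lg: "log 2 (1/2::real) = -1" by (simp add: log_divide)
    show ?thesis using dc_post(1)[OF Ic _ _ B0, where i=0] P0 unfolding I_def
      by (simp add: BC eta_def h lg)
  qed
  have d1: "dc_capacity (post_state j k l (gW_state l1 l2 l3) I 1) = 1"
    using dc_post(1)[OF Ic _ _ B0, where i=1] P1 unfolding I_def
    by (simp add: eta_def)
  have S: "{i. i < 2 \<and> meas_prob j k l (gW_state l1 l2 l3) I i \<noteq> 0} = {0, 1}"
    using P0 P1 by auto
  have avg: "avg_capacity j k l (gW_state l1 l2 l3) I = 5/3"
    unfolding avg_capacity_def S using P0 P1 d0 d1 by simp
  have le: "\<And>x. x \<in> {avg_capacity j k l (gW_state l1 l2 l3) U | U. unitary2 U} \<Longrightarrow> x \<le> 5/3"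
  proof -
    fix x assume "x \<in> {avg_capacity j k l (gW_state l1 l2 l3) U | U. unitary2 U}"
    then obtain U where "unitary2 U" "x = avg_capacity j k l (gW_state l1 l2 l3) U" by auto
    then have "x \<le> 1 + 2 * (B * C)" using avg_le[OF _ B0 s1] by (simp add: mult.assoc)
    then show "x \<le> 5/3" unfolding BC by simp
  qed
  show ?thesis unfolding cd_capacity_def
    by (rule cSup_eq_maximum) (use avg unitary_one le in \<open>auto simp: I_def\<close>)
qed

end

lemma cp_le:
  assumes p: "perm3 j k l" and nn: "l1 \<ge> 0" "l2 \<ge> 0" "l3 \<ge> 0" and s1: "l1\<^sup>2 + l2\<^sup>2 + l3\<^sup>2 = 1"
  shows "control_power j k l (gW_state l1 l2 l3) \<le> 2 * ql l1 l2 l3 k * ql l1 l2 l3 l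
     + (eta ((ql l1 l2 l3 l)\<^sup>2) + eta (1 - (ql l1 l2 l3 l)\<^sup>2))
     - (eta ((ql l1 l2 l3 j)\<^sup>2) + eta (1 - (ql l1 l2 l3 j)\<^sup>2))"
proof -
  interpret gw l1 l2 l3 j k l by unfold_locales (rule p)
  have B0: "0 \<le> B" "0 \<le> C" using nn by (auto simp: ql_def)
  have s: "A\<^sup>2 + B\<^sup>2 + C\<^sup>2 = 1" using sumsq s1 by simp
  have e1: "A\<^sup>2 + B\<^sup>2 = 1 - C\<^sup>2" "B\<^sup>2 + C\<^sup>2 = 1 - A\<^sup>2" using s by simp_all
  show ?thesis unfolding control_power_def dc_redkl e1 using cd_le[OF B0 s] by simp
qed

lemma cp_W:
  assumes p: "perm3 j k l"
  shows "control_power j k l W_state = 2/3"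
proof -
  interpret gw "1/sqrt 3" "1/sqrt 3" "1/sqrt 3" j k l by unfold_locales (rule p)
  have q: "\<And>i. ql (1/sqrt 3) (1/sqrt 3) (1/sqrt 3) i = 1/sqrt 3" by (simp add: ql_def)
  have A2: "(1/sqrt 3 :: real)\<^sup>2 = 1/3" by (simp add: power_divide)
  have "control_power j k l W_state = 5/3 - (1 - (eta (1/3 + 1/3) + eta (1/3)) + (eta (1/3) + eta (1/3 + 1/3)))"
    unfolding control_power_def W_state_def dc_redkl cd_W[OF q q q] q A2 ..
  then show ?thesis by simp
qed

lemma cp_set:
  "{control_power j k l \<rho> | j k l. j \<in> {1,2,3} \<and> k \<in> {1,2,3} \<and> l \<in> {1,2,3} \<and> distinct [j, k, l]}
   = {control_power 1 2 3 \<rho>, control_power 1 3 2 \<rho>, control_power 2 1 3 \<rho>,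
      control_power 2 3 1 \<rho>, control_power 3 1 2 \<rho>, control_power 3 2 1 \<rho>}" (is "?L = ?R")
proof
  show "?L \<subseteq> ?R"
  proof
    fix x assume "x \<in> ?L"
    then obtain j k l where x: "x = control_power j k l \<rho>" and c: "j \<in> {1,2,3}" "k \<in> {1,2,3}" "l \<in> {1,2,3}" "distinct [j, k, l]"
      by blast
    from c show "x \<in> ?R" unfolding x by (elim insertE; simp)
  qed
  have mem: "\<And>j k l. perm3 j k l \<Longrightarrow> control_power j k l \<rho> \<in> ?L" unfolding perm3_def by blast
  show "?R \<subseteq> ?L" using mem[of 1 2 3] mem[of 1 3 2] mem[of 2 1 3] mem[of 2 3 1] mem[of 3 1 2] mem[of 3 2 1]
    by (simp add: perm3_def)
qed

lemma lin3: "(m::real) \<le> 2*x + a - b \<Longrightarrow> m \<le> 2*y + b - c \<Longrightarrow> m \<le> 2*z + c - a \<Longrightarrow> 3*m \<le> 2*(z + x + y)"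
  by (simp add: algebra_simps)

lemma fin3: "3*(m::real) \<le> 2*s \<Longrightarrow> 2*s \<le> 2*t \<Longrightarrow> t = 1 \<Longrightarrow> m \<le> 2/3"
  by simp

theorem proposition1:
  fixes l1 l2 l3 :: real
  assumes "l1 \<ge> 0" and "l2 \<ge> 0" and "l3 \<ge> 0"
    and "l1\<^sup>2 + l2\<^sup>2 + l3\<^sup>2 = 1"
  shows "min_control_power (gW_state l1 l2 l3) \<le> 2 / 3
     \<and> min_control_power W_state = 2 / 3"
proof
  define m where "m = min_control_power (gW_state l1 l2 l3)"
  have fin: "finite {control_power j k l (gW_state l1 l2 l3) | j k l. j \<in> {1,2,3} \<and> k \<in> {1,2,3} \<and> l \<in> {1,2,3} \<and> distinct [j, k, l]}"
    unfolding cp_set by simp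
  have mle: "\<And>j k l. perm3 j k l \<Longrightarrow> m \<le> control_power j k l (gW_state l1 l2 l3)"
    unfolding m_def min_control_power_def
    by (rule Min_le[OF fin]) (auto simp: perm3_def)
  have p: "perm3 1 2 3" "perm3 2 3 1" "perm3 3 1 2" by (simp_all add: perm3_def)
  have c1: "m \<le> 2 * l2 * l3 + (eta (l3\<^sup>2) + eta (1 - l3\<^sup>2)) - (eta (l1\<^sup>2) + eta (1 - l1\<^sup>2))"
    using mle[OF p(1)] cp_le[OF p(1) assms] by (simp add: ql_def)
  have c2: "m \<le> 2 * l3 * l1 + (eta (l1\<^sup>2) + eta (1 - l1\<^sup>2)) - (eta (l2\<^sup>2) + eta (1 - l2\<^sup>2))"
    using mle[OF p(2)] cp_le[OF p(2) assms] by (simp add: ql_def)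
  have c3: "m \<le> 2 * l1 * l2 + (eta (l2\<^sup>2) + eta (1 - l2\<^sup>2)) - (eta (l3\<^sup>2) + eta (1 - l3\<^sup>2))"
    using mle[OF p(3)] cp_le[OF p(3) assms] by (simp add: ql_def)
  have "2 * (l1 * l2 + l2 * l3 + l3 * l1) \<le> 2 * (l1\<^sup>2 + l2\<^sup>2 + l3\<^sup>2)"
  proof -
    have "0 \<le> (l1-l2)\<^sup>2 + (l2-l3)\<^sup>2 + (l3-l1)\<^sup>2" by simp
    also have "(l1-l2)\<^sup>2 + (l2-l3)\<^sup>2 + (l3-l1)\<^sup>2 = 2 * (l1\<^sup>2 + l2\<^sup>2 + l3\<^sup>2) - 2 * (l1 * l2 + l2 * l3 + l3 * l1)"
      by (simp add: power2_diff algebra_simps)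
    finally show ?thesis by linarith
  qed
  moreover have "3 * m \<le> 2 * (l1 * l2 + l2 * l3 + l3 * l1)" using lin3[OF c1[unfolded mult.assoc] c2[unfolded mult.assoc] c3[unfolded mult.assoc]] .
  ultimately show "min_control_power (gW_state l1 l2 l3) \<le> 2 / 3" unfolding m_def[symmetric]
    using assms(4) by (intro fin3)
next
  have "{control_power j k l W_state | j k l. j \<in> {1,2,3} \<and> k \<in> {1,2,3} \<and> l \<in> {1,2,3} \<and> distinct [j, k, l]} = {2/3}"
    unfolding cp_set by (simp add: cp_W perm3_def)
  then show "min_control_power W_state = 2 / 3" unfolding min_control_power_def by simp
qed


end
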